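(* Let $A\in\mathsf{M}_n(\mathbb{C})$ and let $P=\{V_1,\dots,V_h\}$ be a partition of $\{1,\dots,n\}$. Let $\omega=\exp(2\pi \mathrm{i}/h)$ and $\alpha_{ij}=(i-j)\bmod h$ for integers $i,j$. Suppose that both of the following hold: (i) for every eigenvalue $\lambda$ of $A$ and every right Jordan chain $\{x_{\langle 0,j\rangle}\}_{j=1}^p$ of $A$ corresponding to $\lambda$, writing $x_{ij}$ for the subvector of $x_{\langle 0,j\rangle}$ indexed by $V_i$ ($i\in\{1,\dots,h\}$), and letting $x_{\langle k,j\rangle}\in\mathbb{C}^n$ be the vector whose subvector indexed by $V_i$ is $(\omega^k)^{\alpha_{ij}}x_{ij}$ for each $i$, the set $\{x_{\langle k,j\rangle}\}_{j=1}^p$ is a right Jordan chain of $A$ corresponding to $\lambda\omega^k$, for every $k\in\{0,1,\dots,h-1\}$; (ii) for every eigenvalue $\lambda$ of $A$ and every left Jordan chain $\{y_{\langle j,0\rangle}\}_{j=1}^p$ of $A$ corresponding to $\lambda$, writing $y_{ji}$ for the subvector of $y_{\langle j,0\rangle}$ indexed by $V_i$, and letting $y_{\langle j,k\rangle}\in\mathbb{C}^n$ be the vector whose subvector indexed by $V_i$ is $(\omega^k)^{\alpha_{ji}}y_{ji}$ for each $i$, the set $\{y_{\langle j,k\rangle}\}_{j=1}^p$ is a left Jordan chain of $A$ corresponding to $\lambda\omega^k$, for every $k\in\{0,1,\dots,h-1\}$. Then $A$ is $h$-cyclic with partition $P$.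
   Context: A right Jordan chain of $A$ corresponding to $\lambda$ is a list $x_1,\dots,x_p\in\mathbb{C}^n$ with $x_1\neq 0$, $Ax_1=\lambda x_1$ and $Ax_j=\lambda x_j+x_{j-1}$ for $1<j\le p$. A left Jordan chain of $A$ corresponding to $\lambda$ is a list $y_1,\dots,y_p\in\mathbb{C}^n$ (nonzero) with $y_p^\top A=\lambda y_p^\top$ and $y_j^\top A=\lambda y_j^\top+y_{j+1}^\top$ for $1\le j<p$ (so that these are the rows of $S^{-1}$ corresponding to a Jordan block when $S^{-1}AS$ is in Jordan form). Subvectors indexed by $V_i$ list the entries with indices in $V_i$ in increasing order. The digraph $\Gamma_A$ of $A=[a_{ij}]$ has vertex set $\{1,\dots,n\}$ and arcs $(i,j)$ with $a_{ij}\ne 0$; $A$ is $h$-cyclic with partition $P$ if for every arc $(i,j)$ there is $\ell\in\{1,\dots,h\}$ with $i\in V_\ell$, $j\in V_{\ell+1}$, where $V_{h+1}:=V_1$. *)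

theory Defs
  imports Complex_Main "Jordan_Normal_Form.Char_Poly"
begin

text \<open>Indices of vectors/matrices are 0-based: the ground set is {0..<n}.
  Blocks of the partition are V 1, ..., V h. Jordan chains are functions on {1..p}.\<close>

definition is_partition :: "nat \<Rightarrow> nat \<Rightarrow> (nat \<Rightarrow> nat set) \<Rightarrow> bool" where
  "is_partition n h V \<longleftrightarrow> h \<ge> 1 \<and> (\<forall>i\<in>{1..h}. V i \<noteq> {}) \<and>
     (\<forall>i\<in>{1..h}. \<forall>j\<in>{1..h}. i \<noteq> j \<longrightarrow> V i \<inter> V j = {}) \<and>
     (\<Union>i\<in>{1..h}. V i) = {0..<n}"

definition right_jordan_chain :: "complex mat \<Rightarrow> complex \<Rightarrow> (nat \<Rightarrow> complex vec) \<Rightarrow> nat \<Rightarrow> bool" where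
  "right_jordan_chain A lam x p \<longleftrightarrow> p \<ge> 1 \<and>
     (\<forall>j\<in>{1..p}. x j \<in> carrier_vec (dim_row A)) \<and>
     x 1 \<noteq> 0\<^sub>v (dim_row A) \<and>
     A *\<^sub>v x 1 = lam \<cdot>\<^sub>v x 1 \<and>
     (\<forall>j\<in>{2..p}. A *\<^sub>v x j = lam \<cdot>\<^sub>v x j + x (j - 1))"

text \<open>Left Jordan chain y 1, ..., y p of A for lambda; the row-vector identity
  y^T A = c y^T + z^T is written as A^T y = c y + z.\<close>
definition left_jordan_chain :: "complex mat \<Rightarrow> complex \<Rightarrow> (nat \<Rightarrow> complex vec) \<Rightarrow> nat \<Rightarrow> bool" where
  "left_jordan_chain A lam y p \<longleftrightarrow> p \<ge> 1 \<and>
     (\<forall>j\<in>{1..p}. y j \<in> carrier_vec (dim_row A) \<and> y j \<noteq> 0\<^sub>v (dim_row A)) \<and>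
     transpose_mat A *\<^sub>v y p = lam \<cdot>\<^sub>v y p \<and>
     (\<forall>j\<in>{1..<p}. transpose_mat A *\<^sub>v y j = lam \<cdot>\<^sub>v y j + y (j + 1))"

definition block_of :: "nat \<Rightarrow> (nat \<Rightarrow> nat set) \<Rightarrow> nat \<Rightarrow> nat" where
  "block_of h V m = (THE i. i \<in> {1..h} \<and> m \<in> V i)"

definition omega :: "nat \<Rightarrow> complex" where
  "omega h = exp (2 * complex_of_real pi * \<i> / of_nat h)"

definition alpha :: "nat \<Rightarrow> int \<Rightarrow> int \<Rightarrow> nat" where
  "alpha h i j = nat ((i - j) mod int h)"

definition right_shift :: "nat \<Rightarrow> nat \<Rightarrow> (nat \<Rightarrow> nat set) \<Rightarrow> nat \<Rightarrow> (nat \<Rightarrow> complex vec) \<Rightarrow> nat \<Rightarrow> complex vec" where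
  "right_shift n h V k x j = vec n (\<lambda>m. (omega h ^ k) ^ alpha h (int (block_of h V m)) (int j) * x j $ m)"

definition left_shift :: "nat \<Rightarrow> nat \<Rightarrow> (nat \<Rightarrow> nat set) \<Rightarrow> nat \<Rightarrow> (nat \<Rightarrow> complex vec) \<Rightarrow> nat \<Rightarrow> complex vec" where
  "left_shift n h V k y j = vec n (\<lambda>m. (omega h ^ k) ^ alpha h (int j) (int (block_of h V m)) * y j $ m)"

definition h_cyclic :: "complex mat \<Rightarrow> nat \<Rightarrow> (nat \<Rightarrow> nat set) \<Rightarrow> bool" where
  "h_cyclic A h V \<longleftrightarrow> (\<forall>i<dim_row A. \<forall>j<dim_col A. A $$ (i, j) \<noteq> 0 \<longrightarrow>
     (\<exists>l\<in>{1..h}. i \<in> V l \<and> j \<in> V (if l = h then 1 else l + 1)))"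

end

theory Submission
  imports Defs "Jordan_Normal_Form.Jordan_Normal_Form_Existence"
begin


lemma omega_cis: "omega h = cis (2 * pi / real h)"
  unfolding omega_def cis_conv_exp by (simp add: field_simps)

lemma omega_pow: "omega h ^ k = cis (real k * (2 * pi / real h))"
  unfolding omega_cis DeMoivre ..

lemma omega_nz: "omega h \<noteq> 0"
  unfolding omega_def by simp

lemma omega_h: "h \<ge> 1 \<Longrightarrow> omega h ^ h = 1"
  unfolding omega_pow using cis_2pi by simp

lemma omega_one_dvd: assumes h: "h \<ge> 1" and e: "omega h ^ k = 1" shows "h dvd k"
proof -
  from e have "cos (real k * (2 * pi / real h)) = 1"
    unfolding omega_pow by (metis cis.simps(1) one_complex.simps(1))
  then obtain z :: int where z: "real k * (2 * pi / real h) = of_int z * 2 * pi"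
    using iffD1[OF cos_one_2pi_int] by blast
  hence "real k = real_of_int z * real h" using h by (simp add: field_simps)
  hence "int k = z * int h" by (metis of_int_eq_iff of_int_mult of_int_of_nat_eq)
  hence "int h dvd int k" by simp
  thus ?thesis by simp
qed

lemma omega_mod: assumes h: "h \<ge> 1" shows "omega h ^ x = omega h ^ (x mod h)"
proof -
  have "omega h ^ x = omega h ^ (h * (x div h) + x mod h)" by simp
  also have "\<dots> = omega h ^ (x mod h)"
    unfolding power_add power_mult omega_h[OF h] by simp
  finally show ?thesis .
qed

lemma omega_eq_mod: assumes h: "h \<ge> 1" and e: "omega h ^ x = omega h ^ y"
  shows "x mod h = y mod h"
proof -
  have gen: "x mod h = y mod h" if xy: "y \<le> x" and e: "omega h ^ x = omega h ^ y" for x y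
  proof -
    have "omega h ^ y * omega h ^ (x - y) = omega h ^ y * 1"
      using e xy by (simp flip: power_add)
    hence "omega h ^ (x - y) = 1" using omega_nz by simp
    from omega_one_dvd[OF h this] show ?thesis using xy by (simp add: mod_eq_dvd_iff_nat)
  qed
  show ?thesis using gen[of y x] gen[of x y] e by (cases "y \<le> x") auto
qed

lemma alpha_pow: assumes h: "h \<ge> 1"
  shows "omega h ^ alpha h (int b) (int j) * omega h ^ j = omega h ^ b"
proof -
  have "(nat ((int b - int j) mod int h) + j) mod h = b mod h"
  proof -
    have "int ((nat ((int b - int j) mod int h) + j) mod h) = ((int b - int j) mod int h + int j) mod int h"
      using h by (simp add: zmod_int)
    also have "\<dots> = int b mod int h" by (simp add: mod_add_left_eq)
    finally have "int ((nat ((int b - int j) mod int h) + j) mod h) = int (b mod h)" by (simp add: zmod_int)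
    thus ?thesis by (simp only: of_nat_eq_iff)
  qed
  thus ?thesis unfolding alpha_def
    by (metis omega_mod[OF h] power_add)
qed



lemma jm_entries:
  "c < sum_list (map fst n_as) \<Longrightarrow> \<exists>s a. s \<le> c \<and> (\<forall>t. s \<le> t \<and> t \<le> c \<longrightarrow>
     (\<forall>i < sum_list (map fst n_as). jordan_matrix n_as $$ (i,t) =
        (if i = t then a else if Suc i = t \<and> s < t then 1 else 0)))"
proof (induct n_as arbitrary: c)
  case Nil
  then show ?case by simp
next
  case (Cons na n_as)
  obtain m a where na: "na = (m,a)" by force
  let ?N = "sum_list (map fst n_as)"
  let ?B = "jordan_matrix n_as"
  have J: "jordan_matrix ((m,a) # n_as) = four_block_mat (jordan_block m a) (0\<^sub>m m ?N) (0\<^sub>m ?N m) ?B"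
    unfolding jordan_matrix_def by (simp add: Let_def jordan_matrix_def[symmetric])
  show ?case
  proof (cases "c < m")
    case True
    show ?thesis
      by (rule exI[of _ 0], rule exI[of _ a], insert True Cons(2), auto simp: J na)
  next
    case False
    with Cons(2) have "c - m < ?N" by (auto simp: na)
    from Cons(1)[OF this] obtain s b where s: "s \<le> c - m" and
      H: "\<And>t i. s \<le> t \<Longrightarrow> t \<le> c - m \<Longrightarrow> i < ?N \<Longrightarrow> ?B $$ (i,t) =
        (if i = t then b else if Suc i = t \<and> s < t then 1 else 0)" by blast
    show ?thesis
    proof (rule exI[of _ "s + m"], rule exI[of _ b], intro conjI allI impI)
      show "s + m \<le> c" using s False by auto
      fix t i assume t: "s + m \<le> t \<and> t \<le> c" and i: "i < sum_list (map fst (na # n_as))"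
      show "jordan_matrix (na # n_as) $$ (i, t) = (if i = t then b else if Suc i = t \<and> s + m < t then 1 else 0)"
      proof (cases "i < m")
        case True thus ?thesis using t i Cons(2) by (auto simp: na J)
      next
        case False
        have "jordan_matrix (na # n_as) $$ (i, t) = ?B $$ (i - m, t - m)"
          using False t i Cons(2) by (auto simp: na J)
        also have "\<dots> = (if i - m = t - m then b else if Suc (i - m) = t - m \<and> s < t - m then 1 else 0)"
          using H[of "t - m" "i - m"] t i False by (auto simp: na)
        finally show ?thesis using False t by auto
      qed
    qed
  qed
qed



lemma block_of_prop: assumes P: "is_partition n h V" and m: "m < n"
  shows "block_of h V m \<in> {1..h} \<and> m \<in> V (block_of h V m)"
proof -
  from P m have "m \<in> (\<Union>i\<in>{1..h}. V i)" unfolding is_partition_def by auto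
  then obtain i where i: "i \<in> {1..h}" "m \<in> V i" by blast
  have "\<exists>!i. i \<in> {1..h} \<and> m \<in> V i"
    using i P unfolding is_partition_def by blast
  from theI'[OF this] show ?thesis unfolding block_of_def .
qed

definition dg :: "nat \<Rightarrow> (nat \<Rightarrow> complex) \<Rightarrow> complex mat" where
  "dg n f = mat n n (\<lambda>(i,j). if i = j then f i else 0)"

lemma dg_carrier[simp]: "dg n f \<in> carrier_mat n n" unfolding dg_def by simp

lemma dg_mult_vec: assumes v: "v \<in> carrier_vec n"
  shows "dg n f *\<^sub>v v = vec n (\<lambda>m. f m * v $ m)"
proof (rule eq_vecI)
  fix i assume "i < dim_vec (vec n (\<lambda>m. f m * v $ m))"
  hence i: "i < n" by simp
  have "(dg n f *\<^sub>v v) $ i = (\<Sum>k\<in>{0..<n}. (if i = k then f i else 0) * v $ k)"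
    using i v by (simp add: dg_def scalar_prod_def)
  also have "\<dots> = (\<Sum>k\<in>{0..<n}. if k = i then f i * v $ k else 0)"
    by (rule sum.cong, auto)
  also have "\<dots> = f i * v $ i" using i by simp
  finally show "(dg n f *\<^sub>v v) $ i = vec n (\<lambda>m. f m * v $ m) $ i" using i by simp
qed (insert v, auto simp: dg_def)

lemma mult_dg: assumes A: "A \<in> carrier_mat n n" and that: "i < n" "j < n"
  shows "(A * dg n f) $$ (i,j) = A $$ (i,j) * f j"
proof -
  have "(A * dg n f) $$ (i,j) = (\<Sum>k\<in>{0..<n}. A $$ (i,k) * (if k = j then f k else 0))"
    using A that by (simp add: dg_def scalar_prod_def)
  also have "\<dots> = (\<Sum>k\<in>{0..<n}. if k = j then A $$ (i,k) * f k else 0)"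
    by (rule sum.cong, auto)
  also have "\<dots> = A $$ (i,j) * f j" using that by simp
  finally show ?thesis .
qed

lemma dg_mult: assumes A: "A \<in> carrier_mat n n" and that: "i < n" "j < n"
  shows "(dg n f * A) $$ (i,j) = f i * A $$ (i,j)"
proof -
  have "(dg n f * A) $$ (i,j) = (\<Sum>k\<in>{0..<n}. (if i = k then f i else 0) * A $$ (k,j))"
    using A that by (simp add: dg_def scalar_prod_def)
  also have "\<dots> = (\<Sum>k\<in>{0..<n}. if k = i then f i * A $$ (k,j) else 0)"
    by (rule sum.cong, auto)
  also have "\<dots> = f i * A $$ (i,j)" using that by simp
  finally show ?thesis .
qed

lemma next_block: assumes h: "h \<ge> 2" and p: "p \<in> {1..h}" and q: "q \<in> {1..h}"
  and e: "q mod h = Suc p mod h"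
  shows "q = (if p = h then 1 else p + 1)"
proof -
  have qm: "q mod h = (if q = h then 0 else q)" using q by auto
  have pm: "Suc p mod h = (if p = h then 1 else if Suc p = h then 0 else Suc p)"
    using p h by (auto simp: mod_Suc)
  show ?thesis using e qm pm p q by (auto split: if_splits)
qed



lemma dg_dims[simp]: "dim_row (dg n f) = n" "dim_col (dg n f) = n" unfolding dg_def by auto

theorem theorem4p5:
  fixes A :: "complex mat" and n h :: nat and V :: "nat \<Rightarrow> nat set"
  assumes A: "A \<in> carrier_mat n n"
    and P: "is_partition n h V"
    and right: "\<And>lam x p k. eigenvalue A lam \<Longrightarrow> right_jordan_chain A lam x p \<Longrightarrow> k < h \<Longrightarrow>
        right_jordan_chain A (lam * omega h ^ k) (right_shift n h V k x) p"
    and left: "\<And>lam y p k. eigenvalue A lam \<Longrightarrow> left_jordan_chain A lam y p \<Longrightarrow> k < h \<Longrightarrow>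
        left_jordan_chain A (lam * omega h ^ k) (left_shift n h V k y) p"
  shows "h_cyclic A h V"
proof (cases "h = 1")
  case True
  have "(\<Union>i\<in>{1..h}. V i) = {0..<n}" using P unfolding is_partition_def by blast
  hence "V 1 = {0..<n}" using True by simp
  thus ?thesis using A True unfolding h_cyclic_def by auto
next
  case False
  with P have h2: "h \<ge> 2" and h1: "h \<ge> 1" unfolding is_partition_def by auto
  define \<omega> where "\<omega> = omega h"
  define b where "b = block_of h V"
  define f where "f = (\<lambda>m. \<omega> ^ b m)"
  define g where "g = (\<lambda>m. \<omega> * \<omega> ^ b m)"
  have \<omega>0: "\<omega> \<noteq> 0" unfolding \<omega>_def by (rule omega_nz)
  obtain as where "char_poly A = (\<Prod>a\<leftarrow>as. [:- a, 1:])"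
    using char_poly_factorized[OF A] by blast
  from jordan_nf_exists[OF A this] obtain n_as where "jordan_nf A n_as" by blast
  hence "similar_mat A (jordan_matrix n_as)" unfolding jordan_nf_def by blast
  then obtain PP QQ where wit: "similar_mat_wit A (jordan_matrix n_as) PP QQ"
    unfolding similar_mat_def by blast
  define J where "J = jordan_matrix n_as"
  have dA: "dim_row A = n" using A by simp
  from wit have W: "{A, J, PP, QQ} \<subseteq> carrier_mat n n \<and> PP * QQ = 1\<^sub>m n \<and> QQ * PP = 1\<^sub>m n \<and> A = PP * J * QQ"
    unfolding similar_mat_wit_def J_def Let_def dA .
  have J: "J \<in> carrier_mat n n" and Pc: "PP \<in> carrier_mat n n" and Qc: "QQ \<in> carrier_mat n n"
    using conjunct1[OF W] by auto
  have PQ: "PP * QQ = 1\<^sub>m n" and QP: "QQ * PP = 1\<^sub>m n" and AJ: "A = PP * J * QQ"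
    using W by blast+
  have N: "sum_list (map fst n_as) = n" using J unfolding J_def by auto
  have AP: "A * PP = PP * J"
  proof -
    have "A * PP = PP * J * (QQ * PP)" unfolding AJ
      by (rule assoc_mult_mat[of "PP * J" n n QQ n PP n], insert Pc Qc J, auto)
    also have "\<dots> = PP * J" unfolding QP using Pc J by simp
    finally show ?thesis .
  qed
  have PU: "PP *\<^sub>v unit_vec n u = col PP u" if u: "u < n" for u
  proof -
    have "col (PP * 1\<^sub>m n) u = PP *\<^sub>v col (1\<^sub>m n) u" using Pc u by (intro col_mult2) auto
    thus ?thesis using u Pc by simp
  qed
  have colc: "col PP u \<in> carrier_vec n" for u
  proof -
    have "dim_row PP = n" using Pc by simp
    thus ?thesis using col_dim[of PP u] by simp
  qed
  have key: "A *\<^sub>v (dg n f *\<^sub>v col PP t) = dg n g *\<^sub>v (A *\<^sub>v col PP t)" if t: "t < n" for t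
  proof -
    from jm_entries[of t n_as] t N obtain s a where st: "s \<le> t" and
      ent: "\<And>u i. s \<le> u \<Longrightarrow> u \<le> t \<Longrightarrow> i < n \<Longrightarrow> J $$ (i,u) =
        (if i = u then a else if Suc i = u \<and> s < u then 1 else 0)" unfolding J_def by auto
    have Acol: "A *\<^sub>v col PP u = a \<cdot>\<^sub>v col PP u + (if s < u then col PP (u - 1) else 0\<^sub>v n)"
      if u: "s \<le> u" "u \<le> t" for u
    proof -
      have "A *\<^sub>v col PP u = col (A * PP) u" using A Pc u t by (intro col_mult2[symmetric]) auto
      also have "\<dots> = col (PP * J) u" unfolding AP ..
      also have "\<dots> = PP *\<^sub>v col J u" using Pc J u t by (intro col_mult2) auto
      also have "col J u = a \<cdot>\<^sub>v unit_vec n u + (if s < u then unit_vec n (u - 1) else 0\<^sub>v n)"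
        by (rule eq_vecI, insert J u t ent, auto)
      also have "PP *\<^sub>v \<dots> = a \<cdot>\<^sub>v col PP u + (if s < u then col PP (u - 1) else 0\<^sub>v n)"
        using u t Pc PU colc
        by (cases "s < u", auto simp: mult_add_distrib_mat_vec[OF Pc] mult_mat_vec[OF Pc])
      finally show ?thesis .
    qed
    define x where "x = (\<lambda>j. col PP (s + j - 1))"
    define q where "q = t - s"
    have xc: "x j \<in> carrier_vec n" for j unfolding x_def by (rule colc)
    have xd: "dim_vec (x j) = n" for j using xc[of j] by simp
    have x0: "x 1 \<noteq> 0\<^sub>v n"
    proof
      assume "x 1 = 0\<^sub>v n"
      hence "col (QQ * PP) s = 0\<^sub>v n" using Qc Pc st t unfolding x_def
        by (subst col_mult2[of _ n n _ n]) auto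
      thus False unfolding QP using st t by simp
    qed
    have chain: "right_jordan_chain A a x (Suc q)"
      unfolding right_jordan_chain_def
    proof (intro conjI ballI)
      show "x j \<in> carrier_vec (dim_row A)" for j using xc A by simp
      show "x 1 \<noteq> 0\<^sub>v (dim_row A)" using x0 A by simp
      show "A *\<^sub>v x 1 = a \<cdot>\<^sub>v x 1" using Acol[of s] st xc[of 1] unfolding x_def by simp
      fix j assume j: "j \<in> {2..Suc q}"
      have "A *\<^sub>v x j = a \<cdot>\<^sub>v x j + (if s < s + j - 1 then col PP (s + j - 1 - 1) else 0\<^sub>v n)"
        unfolding x_def using j q_def by (intro Acol) auto
      also have "s + j - 1 - 1 = s + (j - 1) - 1" using j by auto
      finally have "A *\<^sub>v x j = a \<cdot>\<^sub>v x j + (if s < s + j - 1 then col PP (s + (j - 1) - 1) else 0\<^sub>v n)" .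
      moreover have "s < s + j - 1" using j by auto
      ultimately show "A *\<^sub>v x j = a \<cdot>\<^sub>v x j + x (j - 1)" unfolding x_def by simp
    qed simp
    have Ax1: "A *\<^sub>v x 1 = a \<cdot>\<^sub>v x 1" using Acol[of s] st xc[of 1] unfolding x_def by simp
    have eig: "eigenvalue A a" unfolding eigenvalue_def eigenvector_def
    proof (intro exI conjI)
      show "x 1 \<in> carrier_vec (dim_row A)" using xc A by simp
      show "x 1 \<noteq> 0\<^sub>v (dim_row A)" using x0 A by simp
    qed (rule Ax1)
    define z where "z = right_shift n h V 1 x"
    have zch: "right_jordan_chain A (a * \<omega>) z (Suc q)"
      using right[OF eig chain, of 1] h2 unfolding z_def \<omega>_def by simp
    have zeq: "z j = vec n (\<lambda>m. f m * x j $ m / \<omega> ^ j)" for j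
    proof (rule eq_vecI)
      fix m assume "m < dim_vec (vec n (\<lambda>m. f m * x j $ m / \<omega> ^ j))"
      hence m: "m < n" by simp
      have "\<omega> ^ alpha h (int (b m)) (int j) * \<omega> ^ j = \<omega> ^ b m"
        unfolding \<omega>_def by (rule alpha_pow[OF h1])
      hence "\<omega> ^ alpha h (int (b m)) (int j) = \<omega> ^ b m / \<omega> ^ j" using \<omega>0
        by (simp add: field_simps)
      thus "z j $ m = vec n (\<lambda>m. f m * x j $ m / \<omega> ^ j) $ m"
        using m unfolding z_def right_shift_def f_def b_def \<omega>_def by simp
    qed (simp add: z_def right_shift_def)
    have zc: "z j \<in> carrier_vec n" for j unfolding zeq by simp
    have zlast: "A *\<^sub>v z (Suc q) = (a * \<omega>) \<cdot>\<^sub>v z (Suc q) + (if 0 < q then z q else 0\<^sub>v n)"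
    proof (cases "q = 0")
      case True thus ?thesis using zch zc[of 1] unfolding right_jordan_chain_def by simp
    next
      case False
      hence "Suc q \<in> {2..Suc q}" by auto
      moreover from zch have "\<forall>j\<in>{2..Suc q}. A *\<^sub>v z j = (a * \<omega>) \<cdot>\<^sub>v z j + z (j - 1)"
        unfolding right_jordan_chain_def by blast
      ultimately have "A *\<^sub>v z (Suc q) = (a * \<omega>) \<cdot>\<^sub>v z (Suc q) + z (Suc q - 1)" by blast
      thus ?thesis using False by simp
    qed
    have dvx: "dg n f *\<^sub>v x (Suc q) = \<omega> ^ Suc q \<cdot>\<^sub>v z (Suc q)"
      by (rule eq_vecI, insert \<omega>0, auto simp: dg_mult_vec[OF xc] zeq)
    have xt: "x (Suc q) = col PP t" unfolding x_def q_def using st by simp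
    have LHS: "A *\<^sub>v (dg n f *\<^sub>v col PP t) = \<omega> ^ Suc q \<cdot>\<^sub>v ((a * \<omega>) \<cdot>\<^sub>v z (Suc q) + (if 0 < q then z q else 0\<^sub>v n))"
      unfolding xt[symmetric] dvx zlast[symmetric] using A zc by (simp add: mult_mat_vec)
    have RHS: "dg n g *\<^sub>v (A *\<^sub>v col PP t) = dg n g *\<^sub>v (a \<cdot>\<^sub>v x (Suc q) + (if 0 < q then x q else 0\<^sub>v n))"
    proof -
      have Ac: "A *\<^sub>v col PP t = a \<cdot>\<^sub>v col PP t + (if s < t then col PP (t - 1) else 0\<^sub>v n)"
        using Acol[of t] st by simp
      have "A *\<^sub>v col PP t = a \<cdot>\<^sub>v x (Suc q) + (if 0 < q then x q else 0\<^sub>v n)"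
      proof (cases "s < t")
        case True
        hence "0 < q" "x q = col PP (t - 1)" unfolding x_def q_def by auto
        thus ?thesis using Ac True xt by simp
      next
        case False
        hence "\<not> 0 < q" unfolding q_def by auto
        thus ?thesis using Ac False xt by simp
      qed
      thus ?thesis by simp
    qed
    show ?thesis unfolding LHS RHS
    proof (rule eq_vecI)
      fix i assume "i < dim_vec (dg n g *\<^sub>v (a \<cdot>\<^sub>v x (Suc q) + (if 0 < q then x q else 0\<^sub>v n)))"
      hence i: "i < n" by (simp add: dg_def)
      have e1: "(a \<cdot>\<^sub>v x (Suc q) + x q) $ i = a * x (Suc q) $ i + x q $ i"
        using i xd[of q] xd[of "Suc q"] by simp
      have e2: "(a \<cdot>\<^sub>v x (Suc q)) $ i = a * x (Suc q) $ i" using i xd[of "Suc q"] by simp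
      have e3: "(a \<cdot>\<^sub>v x (Suc 0)) $ i = a * x (Suc 0) $ i" using i xd[of "Suc 0"] by simp
      show "(\<omega> ^ Suc q \<cdot>\<^sub>v ((a * \<omega>) \<cdot>\<^sub>v z (Suc q) + (if 0 < q then z q else 0\<^sub>v n))) $ i =
        (dg n g *\<^sub>v (a \<cdot>\<^sub>v x (Suc q) + (if 0 < q then x q else 0\<^sub>v n))) $ i"
        using i \<omega>0 xc zc xd
        by (cases "0 < q", auto simp: zeq dg_mult_vec g_def f_def e1 e2 e3 field_simps)
    qed (insert zc, auto simp: dg_def)
  qed
  have c1: "A * dg n f \<in> carrier_mat n n" by (rule mult_carrier_mat[OF A dg_carrier])
  have c2: "dg n g * A \<in> carrier_mat n n" by (rule mult_carrier_mat[OF dg_carrier A])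
  have M1: "A * dg n f * PP = dg n g * A * PP"
  proof (rule mat_col_eqI)
    fix t assume "t < dim_col (dg n g * A * PP)"
    hence t: "t < n" using Pc by simp
    have "col (A * dg n f * PP) t = A *\<^sub>v (dg n f *\<^sub>v col PP t)"
      using A Pc t colc by (subst col_mult2[of _ n n]) (insert c1, auto simp: assoc_mult_mat_vec[OF A dg_carrier colc])
    also have "\<dots> = dg n g *\<^sub>v (A *\<^sub>v col PP t)" by (rule key[OF t])
    also have "\<dots> = col (dg n g * A * PP) t"
      using A Pc t colc by (subst col_mult2[of _ n n]) (insert c2, auto simp: assoc_mult_mat_vec[OF dg_carrier A colc])
    finally show "col (A * dg n f * PP) t = col (dg n g * A * PP) t" .
  qed (insert A Pc, auto)
  have M: "A * dg n f = dg n g * A"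
  proof -
    have "A * dg n f = A * dg n f * 1\<^sub>m n" by (rule right_mult_one_mat[OF c1, symmetric])
    also have "\<dots> = A * dg n f * (PP * QQ)" unfolding PQ ..
    also have "\<dots> = (A * dg n f * PP) * QQ" by (rule assoc_mult_mat[symmetric, OF c1 Pc Qc])
    also have "\<dots> = (dg n g * A * PP) * QQ" unfolding M1 ..
    also have "\<dots> = dg n g * A * (PP * QQ)" by (rule assoc_mult_mat[OF c2 Pc Qc])
    also have "\<dots> = dg n g * A * 1\<^sub>m n" unfolding PQ ..
    also have "\<dots> = dg n g * A" by (rule right_mult_one_mat[OF c2])
    finally show ?thesis .
  qed
  show ?thesis unfolding h_cyclic_def
  proof (intro allI impI)
    fix i j assume i: "i < dim_row A" and j: "j < dim_col A" and nz: "A $$ (i, j) \<noteq> 0"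
    from i j A have i: "i < n" and j: "j < n" by auto
    have "A $$ (i,j) * f j = g i * A $$ (i,j)"
      using M mult_dg[OF A i j, of f] dg_mult[OF A i j, of g] by metis
    hence "\<omega> ^ b j = \<omega> ^ Suc (b i)" using nz unfolding f_def g_def by simp
    hence "b j mod h = Suc (b i) mod h" unfolding \<omega>_def by (rule omega_eq_mod[OF h1])
    hence bj: "b j = (if b i = h then 1 else b i + 1)"
      using next_block[OF h2] block_of_prop[OF P i] block_of_prop[OF P j] unfolding b_def by blast
    show "\<exists>l\<in>{1..h}. i \<in> V l \<and> j \<in> V (if l = h then 1 else l + 1)"
      using block_of_prop[OF P i] block_of_prop[OF P j] bj unfolding b_def by metis
  qed
qed


end
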